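(* Let $(X,\tau)$ be a topological space, $\delta$ a quasi-proximity compatible with $\tau$ such that $\mathcal{V}_\delta$ is transitive, and $\mathcal{B}=\mathcal{B}(\mathcal{V}_\delta)$. Then there exists $\mathcal{V}\in\pi(\delta)\cap T(\tau)$ with $\mathcal{V}\neq\mathcal{V}_\delta$ if and only if at least one of the following holds: (1) there are sets $N_i\in\mathcal{B}$ ($i\in\mathbb{N}$) with $N_i\subsetneq N_{i+1}$ for all $i$ and $\bigcup_{i=1}^\infty N_i\in\mathcal{B}$; (2) there are sets $N_i\in\mathcal{B}$ ($i\in\mathbb{N}$) with $N_{i+1}\subsetneq N_i$ for all $i$ and $\bigcap_{i=1}^\infty N_i\in\mathcal{B}$.
   Context: Quasi-uniformities and quasi-proximities are in the sense of Fletcher–Lindgren; compatible means inducing the topology $\tau$. $T(\tau)$ is the set of compatible transitive quasi-uniformities on $(X,\tau)$ (transitive = having a base of transitive entourages). $\pi(\delta)$ is the set of quasi-uniformities inducing $\delta$, and $\mathcal{V}_\delta$ its coarsest (totally bounded) element. For $N\subseteq X$, $U_N=(N\times N)\cup((X\setminus N)\times X)$ and $\mathcal{B}(\mathcal{V}_\delta)=\{N\in\tau:U_N\in\mathcal{V}_\delta\}$, which is an l-base: a base of $\tau$ closed under finite unions and intersections containing $\emptyset,X$. *)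

theory Defs
  imports "HOL-Analysis.Analysis"
begin

definition quasi_uniformity :: "'a set \<Rightarrow> ('a \<times> 'a) set set \<Rightarrow> bool" where
  "quasi_uniformity X \<U> \<longleftrightarrow>
     \<U> \<noteq> {} \<and>
     (\<forall>U\<in>\<U>. U \<subseteq> X \<times> X \<and> Id_on X \<subseteq> U) \<and>
     (\<forall>U W. U \<in> \<U> \<and> U \<subseteq> W \<and> W \<subseteq> X \<times> X \<longrightarrow> W \<in> \<U>) \<and>
     (\<forall>U\<in>\<U>. \<forall>V\<in>\<U>. U \<inter> V \<in> \<U>) \<and>
     (\<forall>U\<in>\<U>. \<exists>V\<in>\<U>. V O V \<subseteq> U)"

definition qu_compatible :: "'a topology \<Rightarrow> ('a \<times> 'a) set set \<Rightarrow> bool" where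
  "qu_compatible T \<U> \<longleftrightarrow>
     (\<forall>G. openin T G \<longleftrightarrow> G \<subseteq> topspace T \<and> (\<forall>x\<in>G. \<exists>U\<in>\<U>. U `` {x} \<subseteq> G))"

definition qu_transitive :: "('a \<times> 'a) set set \<Rightarrow> bool" where
  "qu_transitive \<U> \<longleftrightarrow> (\<forall>U\<in>\<U>. \<exists>V\<in>\<U>. trans V \<and> V \<subseteq> U)"

definition quasi_proximity :: "'a set \<Rightarrow> ('a set \<Rightarrow> 'a set \<Rightarrow> bool) \<Rightarrow> bool" where
  "quasi_proximity X \<delta> \<longleftrightarrow>
     (\<forall>A B. \<delta> A B \<longrightarrow> A \<subseteq> X \<and> B \<subseteq> X) \<and>
     (\<forall>A B C. A \<subseteq> X \<and> B \<subseteq> X \<and> C \<subseteq> X \<longrightarrow>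
        (\<delta> A (B \<union> C) \<longleftrightarrow> \<delta> A B \<or> \<delta> A C) \<and>
        (\<delta> (A \<union> B) C \<longleftrightarrow> \<delta> A C \<or> \<delta> B C)) \<and>
     (\<forall>A B. \<delta> A B \<longrightarrow> A \<noteq> {} \<and> B \<noteq> {}) \<and>
     (\<forall>A B. A \<subseteq> X \<and> B \<subseteq> X \<and> A \<inter> B \<noteq> {} \<longrightarrow> \<delta> A B) \<and>
     (\<forall>A B. A \<subseteq> X \<and> B \<subseteq> X \<and> \<not> \<delta> A B \<longrightarrow>
        (\<exists>C. C \<subseteq> X \<and> \<not> \<delta> A C \<and> \<not> \<delta> (X - C) B))"

definition qp_compatible :: "'a topology \<Rightarrow> ('a set \<Rightarrow> 'a set \<Rightarrow> bool) \<Rightarrow> bool" where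
  "qp_compatible T \<delta> \<longleftrightarrow>
     (\<forall>G. openin T G \<longleftrightarrow> G \<subseteq> topspace T \<and> (\<forall>x\<in>G. \<not> \<delta> {x} (topspace T - G)))"

definition qu_proximity :: "'a set \<Rightarrow> ('a \<times> 'a) set set \<Rightarrow> 'a set \<Rightarrow> 'a set \<Rightarrow> bool" where
  "qu_proximity X \<U> A B \<longleftrightarrow>
     A \<subseteq> X \<and> B \<subseteq> X \<and> (\<forall>U\<in>\<U>. (A \<times> B) \<inter> U \<noteq> {})"

definition qu_pi :: "'a set \<Rightarrow> ('a set \<Rightarrow> 'a set \<Rightarrow> bool) \<Rightarrow> ('a \<times> 'a) set set set" where
  "qu_pi X \<delta> = {\<U>. quasi_uniformity X \<U> \<and> qu_proximity X \<U> = \<delta>}"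

definition qu_T :: "'a topology \<Rightarrow> ('a \<times> 'a) set set set" where
  "qu_T T = {\<U>. quasi_uniformity (topspace T) \<U> \<and> qu_compatible T \<U> \<and> qu_transitive \<U>}"

definition S_ent :: "'a set \<Rightarrow> 'a set \<Rightarrow> 'a set \<Rightarrow> ('a \<times> 'a) set" where
  "S_ent X A B = ((X - A) \<times> X) \<union> (X \<times> (X - B))"

text \<open>V_delta: the quasi-uniformity generated by the subbase of all S_ent X A B with
A far from B (the coarsest element of pi(delta)).\<close>
definition V_delta :: "'a set \<Rightarrow> ('a set \<Rightarrow> 'a set \<Rightarrow> bool) \<Rightarrow> ('a \<times> 'a) set set" where
  "V_delta X \<delta> = {U. U \<subseteq> X \<times> X \<and>
     (\<exists>F. finite F \<and> F \<subseteq> {(A, B). A \<subseteq> X \<and> B \<subseteq> X \<and> \<not> \<delta> A B} \<and>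
          (X \<times> X) \<inter> (\<Inter>(A, B)\<in>F. S_ent X A B) \<subseteq> U)}"

definition U_N :: "'a set \<Rightarrow> 'a set \<Rightarrow> ('a \<times> 'a) set" where
  "U_N X N = (N \<times> N) \<union> ((X - N) \<times> X)"

definition lbase :: "'a topology \<Rightarrow> ('a \<times> 'a) set set \<Rightarrow> 'a set set" where
  "lbase T \<V> = {N. openin T N \<and> U_N (topspace T) N \<in> \<V>}"

end

theory Submission
  imports Defs "HOL-Library.Ramsey"
begin


definition RF :: "'a set \<Rightarrow> ('a set \<times> 'a set) set \<Rightarrow> ('a \<times> 'a) set" where
  "RF X F = (X \<times> X) \<inter> (\<Inter>(A, B)\<in>F. S_ent X A B)"

lemma RF_mem: "(a,b) \<in> RF X F \<longleftrightarrow> a \<in> X \<and> b \<in> X \<and> (\<forall>(A,B)\<in>F. a \<in> A \<longrightarrow> b \<notin> B)"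
  unfolding RF_def S_ent_def by auto

lemma RF_sub: "RF X F \<subseteq> X \<times> X" unfolding RF_def by blast

lemma V_delta_iff: "U \<in> V_delta X \<delta> \<longleftrightarrow> U \<subseteq> X \<times> X \<and>
   (\<exists>F. finite F \<and> F \<subseteq> {(A, B). A \<subseteq> X \<and> B \<subseteq> X \<and> \<not> \<delta> A B} \<and> RF X F \<subseteq> U)"
  unfolding V_delta_def RF_def by simp

context fixes X :: "'a set" and \<delta> assumes qp: "quasi_proximity X \<delta>"
begin

lemma qpD1: "\<forall>A B. \<delta> A B \<longrightarrow> A \<subseteq> X \<and> B \<subseteq> X"
  using qp unfolding quasi_proximity_def by (elim conjE) assumption
lemma qpD2: "\<forall>A B C. A \<subseteq> X \<and> B \<subseteq> X \<and> C \<subseteq> X \<longrightarrow>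
        (\<delta> A (B \<union> C) \<longleftrightarrow> \<delta> A B \<or> \<delta> A C) \<and>
        (\<delta> (A \<union> B) C \<longleftrightarrow> \<delta> A C \<or> \<delta> B C)"
  using qp unfolding quasi_proximity_def by (elim conjE) assumption
lemma qpD3: "\<forall>A B. \<delta> A B \<longrightarrow> A \<noteq> {} \<and> B \<noteq> {}"
  using qp unfolding quasi_proximity_def by (elim conjE) assumption
lemma qpD4: "\<forall>A B. A \<subseteq> X \<and> B \<subseteq> X \<and> A \<inter> B \<noteq> {} \<longrightarrow> \<delta> A B"
  using qp unfolding quasi_proximity_def by (elim conjE) assumption
lemmas qpD = qpD1 qpD2 qpD3 qpD4

lemma qp_sub: "\<delta> A B \<Longrightarrow> A \<subseteq> X \<and> B \<subseteq> X" using qpD(1) by blast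
lemma qp_ne: "\<delta> A B \<Longrightarrow> A \<noteq> {} \<and> B \<noteq> {}" using qpD(3) by blast
lemma qp_un1: "A \<subseteq> X \<Longrightarrow> B \<subseteq> X \<Longrightarrow> C \<subseteq> X \<Longrightarrow> \<delta> A (B \<union> C) \<longleftrightarrow> \<delta> A B \<or> \<delta> A C"
  using qpD(2) by blast
lemma qp_un2: "A \<subseteq> X \<Longrightarrow> B \<subseteq> X \<Longrightarrow> C \<subseteq> X \<Longrightarrow> \<delta> (A \<union> B) C \<longleftrightarrow> \<delta> A C \<or> \<delta> B C"
  using qpD(2) by blast
lemma qp_int: "A \<subseteq> X \<Longrightarrow> B \<subseteq> X \<Longrightarrow> A \<inter> B \<noteq> {} \<Longrightarrow> \<delta> A B"
  using qpD(4) by blast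

lemma qp_mono: "\<delta> A B \<Longrightarrow> A \<subseteq> A' \<Longrightarrow> A' \<subseteq> X \<Longrightarrow> B \<subseteq> B' \<Longrightarrow> B' \<subseteq> X \<Longrightarrow> \<delta> A' B'"
proof -
  assume h: "\<delta> A B" "A \<subseteq> A'" "A' \<subseteq> X" "B \<subseteq> B'" "B' \<subseteq> X"
  have "\<delta> (A \<union> A') B" using h qp_un2[of A A' B] qp_sub[OF h(1)] by auto
  hence "\<delta> A' B" using h by (simp add: Un_absorb1)
  hence "\<delta> A' (B \<union> B')" using h qp_un1[of A' B B'] qp_sub[OF h(1)] by auto
  thus ?thesis using h by (simp add: Un_absorb1)
qed

lemma qp_far_Union:
  assumes "finite K" "\<forall>B\<in>K. B \<subseteq> X \<and> \<not> \<delta> A B" "A \<subseteq> X"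
  shows "\<not> \<delta> A (\<Union>K)"
  using assms
proof (induction K rule: finite_induct)
  case empty then show ?case using qp_ne by auto
next
  case (insert B K)
  then show ?case using qp_un1[of A B "\<Union>K"] by auto
qed

lemma qp_far_Union2:
  assumes "finite K" "\<forall>A\<in>K. A \<subseteq> X \<and> \<not> \<delta> A B" "B \<subseteq> X"
  shows "\<not> \<delta> (\<Union>K) B"
  using assms
proof (induction K rule: finite_induct)
  case empty then show ?case using qp_ne by auto
next
  case (insert A K)
  then show ?case using qp_un2[of A "\<Union>K" B] by auto
qed

lemma key:
  assumes "finite F" "F \<subseteq> {(A, B). A \<subseteq> X \<and> B \<subseteq> X \<and> \<not> \<delta> A B}"
  shows "A \<subseteq> X \<Longrightarrow> B \<subseteq> X \<Longrightarrow> (A \<times> B) \<inter> RF X F = {} \<Longrightarrow> \<not> \<delta> A B"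
  using assms
proof (induction F arbitrary: A B rule: finite_induct)
  case empty
  then have "A = {} \<or> B = {}" unfolding RF_def by auto
  then show ?case using qp_ne by auto
next
  case (insert p F)
  obtain A' B' where p: "p = (A', B')" by force
  have far: "A' \<subseteq> X" "B' \<subseteq> X" "\<not> \<delta> A' B'" using insert.prems p by auto
  have RFi: "RF X (insert p F) = RF X F \<inter> {(a,b). a \<in> A' \<longrightarrow> b \<notin> B'}"
    unfolding RF_def S_ent_def p by auto
  have 1: "\<not> \<delta> (A - A') B"
    using insert.IH[of "A - A'" B] insert.prems RFi by auto
  have 2: "\<not> \<delta> (A \<inter> A') (B - B')"
    using insert.IH[of "A \<inter> A'" "B - B'"] insert.prems RFi by auto
  have 3: "\<not> \<delta> (A \<inter> A') (B \<inter> B')"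
    using far qp_mono[of "A \<inter> A'" "B \<inter> B'" A' B'] by auto
  have "\<not> \<delta> (A \<inter> A') ((B - B') \<union> (B \<inter> B'))"
    using 2 3 qp_un1[of "A \<inter> A'" "B - B'" "B \<inter> B'"] insert.prems by auto
  moreover have "(B - B') \<union> (B \<inter> B') = B" by auto
  ultimately have 4: "\<not> \<delta> (A \<inter> A') B" by simp
  have "\<not> \<delta> ((A - A') \<union> (A \<inter> A')) B"
    using 1 4 qp_un2[of "A - A'" "A \<inter> A'" B] insert.prems by auto
  moreover have "(A - A') \<union> (A \<inter> A') = A" by auto
  ultimately show ?case by simp
qed

lemma V0_far: "U \<in> V_delta X \<delta> \<Longrightarrow> A \<subseteq> X \<Longrightarrow> B \<subseteq> X \<Longrightarrow> (A \<times> B) \<inter> U = {} \<Longrightarrow> \<not> \<delta> A B"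
proof -
  assume h: "U \<in> V_delta X \<delta>" "A \<subseteq> X" "B \<subseteq> X" "(A \<times> B) \<inter> U = {}"
  then obtain F where F: "finite F" "F \<subseteq> {(A, B). A \<subseteq> X \<and> B \<subseteq> X \<and> \<not> \<delta> A B}" "RF X F \<subseteq> U"
    unfolding V_delta_iff by blast
  have "(A \<times> B) \<inter> RF X F = {}" using h(4) F(3) by blast
  thus ?thesis using key[OF F(1,2) h(2,3)] by blast
qed

lemma V0_refl: "U \<in> V_delta X \<delta> \<Longrightarrow> Id_on X \<subseteq> U"
proof -
  assume "U \<in> V_delta X \<delta>"
  then obtain F where F: "F \<subseteq> {(A, B). A \<subseteq> X \<and> B \<subseteq> X \<and> \<not> \<delta> A B}" "RF X F \<subseteq> U"
    unfolding V_delta_iff by blast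
  have "(x,x) \<in> RF X F" if "x \<in> X" for x
  proof -
    have "x \<notin> B'" if "(A', B') \<in> F" "x \<in> A'" for A' B'
    proof
      assume "x \<in> B'"
      hence "\<delta> A' B'" using qp_int[of A' B'] F(1) that by blast
      thus False using F(1) that by blast
    qed
    thus ?thesis unfolding RF_mem using \<open>x \<in> X\<close> by blast
  qed
  thus ?thesis using F(2) by (auto simp: Id_on_def)
qed

lemma V0_E:
  assumes "U \<in> V_delta X \<delta>"
  obtains F where "finite F" "F \<subseteq> {(A, B). A \<subseteq> X \<and> B \<subseteq> X \<and> \<not> \<delta> A B}" "RF X F \<subseteq> U" "U \<subseteq> X \<times> X"
proof -
  have "U \<subseteq> X \<times> X \<and> (\<exists>F. finite F \<and> F \<subseteq> {(A, B). A \<subseteq> X \<and> B \<subseteq> X \<and> \<not> \<delta> A B} \<and> RF X F \<subseteq> U)"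
    using assms unfolding V_delta_iff .
  thus ?thesis using that by blast
qed

lemma V0_I:
  assumes "finite F" "F \<subseteq> {(A, B). A \<subseteq> X \<and> B \<subseteq> X \<and> \<not> \<delta> A B}" "RF X F \<subseteq> U" "U \<subseteq> X \<times> X"
  shows "U \<in> V_delta X \<delta>"
  unfolding V_delta_iff using assms by (intro conjI exI[of _ F]) auto

lemma V0_Int: "U \<in> V_delta X \<delta> \<Longrightarrow> U' \<in> V_delta X \<delta> \<Longrightarrow> U \<inter> U' \<in> V_delta X \<delta>"
proof -
  assume h: "U \<in> V_delta X \<delta>" "U' \<in> V_delta X \<delta>"
  obtain F where F: "finite F" "F \<subseteq> {(A, B). A \<subseteq> X \<and> B \<subseteq> X \<and> \<not> \<delta> A B}" "RF X F \<subseteq> U" "U \<subseteq> X \<times> X"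
    using h(1) by (rule V0_E)
  obtain F' where F': "finite F'" "F' \<subseteq> {(A, B). A \<subseteq> X \<and> B \<subseteq> X \<and> \<not> \<delta> A B}" "RF X F' \<subseteq> U'"
    using h(2) by (rule V0_E)
  have "RF X (F \<union> F') \<subseteq> U \<inter> U'" using F(3) F'(3) unfolding RF_def by auto
  moreover have "F \<union> F' \<subseteq> {(A, B). A \<subseteq> X \<and> B \<subseteq> X \<and> \<not> \<delta> A B}" using F(2) F'(2) by (rule Un_least)
  moreover have "U \<inter> U' \<subseteq> X \<times> X" using F(4) by blast
  ultimately show ?thesis using F(1) F'(1) by (intro V0_I[of "F \<union> F'"]) auto
qed

lemma RF_in_V0: "finite F \<Longrightarrow> F \<subseteq> {(A, B). A \<subseteq> X \<and> B \<subseteq> X \<and> \<not> \<delta> A B} \<Longrightarrow> RF X F \<in> V_delta X \<delta>"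
  by (rule V0_I) (auto simp: RF_sub)

lemma V0_up: "U \<in> V_delta X \<delta> \<Longrightarrow> U \<subseteq> W \<Longrightarrow> W \<subseteq> X \<times> X \<Longrightarrow> W \<in> V_delta X \<delta>"
  by (erule V0_E) (rule V0_I, assumption+, blast, assumption)

lemma UN_in_V0: "N \<subseteq> X \<Longrightarrow> \<not> \<delta> N (X - N) \<Longrightarrow> U_N X N \<in> V_delta X \<delta>"
proof -
  assume h: "N \<subseteq> X" "\<not> \<delta> N (X - N)"
  have "RF X {(N, X - N)} \<subseteq> U_N X N" unfolding U_N_def by (auto simp: RF_mem)
  moreover have "U_N X N \<subseteq> X \<times> X" using h unfolding U_N_def by auto
  ultimately show ?thesis using RF_in_V0[of "{(N, X - N)}"] h V0_up by auto
qed

lemma V0_UN_far: "U_N X N \<in> V_delta X \<delta> \<Longrightarrow> N \<subseteq> X \<Longrightarrow> \<not> \<delta> N (X - N)"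
  by (rule V0_far) (auto simp: U_N_def)

end



context fixes X :: "'a set" and \<U> assumes qu: "quasi_uniformity X \<U>"
begin
lemma quD12: "\<forall>U\<in>\<U>. U \<subseteq> X \<times> X \<and> Id_on X \<subseteq> U"
  using qu unfolding quasi_uniformity_def by (elim conjE) assumption
lemma quD1: "U \<in> \<U> \<Longrightarrow> U \<subseteq> X \<times> X" using quD12 by blast
lemma quD2: "U \<in> \<U> \<Longrightarrow> Id_on X \<subseteq> U" using quD12 by blast
lemma quD3: "U \<in> \<U> \<Longrightarrow> U \<subseteq> W \<Longrightarrow> W \<subseteq> X \<times> X \<Longrightarrow> W \<in> \<U>"
proof -
  have "\<forall>U W. U \<in> \<U> \<and> U \<subseteq> W \<and> W \<subseteq> X \<times> X \<longrightarrow> W \<in> \<U>"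
    using qu unfolding quasi_uniformity_def by (elim conjE) assumption
  thus "U \<in> \<U> \<Longrightarrow> U \<subseteq> W \<Longrightarrow> W \<subseteq> X \<times> X \<Longrightarrow> W \<in> \<U>" by blast
qed
lemma quD4: "U \<in> \<U> \<Longrightarrow> W \<in> \<U> \<Longrightarrow> U \<inter> W \<in> \<U>"
proof -
  have "\<forall>U\<in>\<U>. \<forall>V\<in>\<U>. U \<inter> V \<in> \<U>"
    using qu unfolding quasi_uniformity_def by (elim conjE) assumption
  thus "U \<in> \<U> \<Longrightarrow> W \<in> \<U> \<Longrightarrow> U \<inter> W \<in> \<U>" by blast
qed
lemma quD5: "X \<times> X \<in> \<U>"
proof -
  have "\<U> \<noteq> {}" using qu unfolding quasi_uniformity_def by (elim conjE) assumption
  then obtain U where "U \<in> \<U>" by blast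
  thus ?thesis using quD1 quD3 by blast
qed
end

lemma RF_in_qu:
  assumes qu: "quasi_uniformity X \<V>" and pr: "qu_proximity X \<V> = \<delta>"
  shows "finite F \<Longrightarrow> F \<subseteq> {(A, B). A \<subseteq> X \<and> B \<subseteq> X \<and> \<not> \<delta> A B} \<Longrightarrow> RF X F \<in> \<V>"
proof (induction F rule: finite_induct)
  case empty
  have "RF X {} = X \<times> X" unfolding RF_def by simp
  thus ?case using quD5[OF qu] by simp
next
  case (insert p F)
  obtain A B where p: "p = (A, B)" by force
  have AB: "A \<subseteq> X" "B \<subseteq> X" "\<not> \<delta> A B" using insert.prems p by auto
  hence "\<not> qu_proximity X \<V> A B" using pr by simp
  then obtain W where W: "W \<in> \<V>" "(A \<times> B) \<inter> W = {}" using AB unfolding qu_proximity_def by blast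
  have "RF X F \<inter> W \<subseteq> RF X (insert p F)"
  proof
    fix z assume z: "z \<in> RF X F \<inter> W"
    obtain a b where ab: "z = (a, b)" by force
    have "a \<in> A \<longrightarrow> b \<notin> B" using W(2) z ab by blast
    thus "z \<in> RF X (insert p F)" using z ab by (auto simp: RF_mem p)
  qed
  moreover have "RF X F \<in> \<V>" using insert.IH[OF subset_trans[OF subset_insertI insert.prems]] .
  hence "RF X F \<inter> W \<in> \<V>" using quD4[OF qu _ W(1)] by blast
  ultimately show ?case using quD3[OF qu _ _ RF_sub] by blast
qed

lemma V0_sub_V:
  assumes qp: "quasi_proximity X \<delta>" and qu: "quasi_uniformity X \<V>" and pr: "qu_proximity X \<V> = \<delta>"
  shows "V_delta X \<delta> \<subseteq> \<V>"
proof
  fix U assume "U \<in> V_delta X \<delta>"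
  then obtain F where F: "finite F" "F \<subseteq> {(A, B). A \<subseteq> X \<and> B \<subseteq> X \<and> \<not> \<delta> A B}" "RF X F \<subseteq> U" "U \<subseteq> X \<times> X"
    using V0_E[OF qp] by blast
  show "U \<in> \<V>" using RF_in_qu[OF qu pr F(1,2)] F(3,4) quD3[OF qu] by blast
qed




lemma if3_0: "(if P then (0::nat) else if Q then 1 else 2) = 0 \<Longrightarrow> P" by (cases P; cases Q) auto
lemma if3_1: "(if P then (0::nat) else if Q then 1 else 2) = 1 \<Longrightarrow> Q" by (cases P; cases Q) auto
lemma if3_2: "(if P then (0::nat) else if Q then 1 else 2) = 2 \<Longrightarrow> \<not> P \<and> \<not> Q" by (cases P; cases Q) auto

lemma fwd:
  fixes T :: "'a topology" and \<delta> :: "'a set \<Rightarrow> 'a set \<Rightarrow> bool"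
  assumes qp0: "quasi_proximity (topspace T) \<delta>"
    and V: "\<V> \<in> qu_pi (topspace T) \<delta> \<inter> qu_T T" and ne: "\<V> \<noteq> V_delta (topspace T) \<delta>"
  shows "(\<exists>N :: nat \<Rightarrow> 'a set. (\<forall>i. N i \<in> lbase T (V_delta (topspace T) \<delta>)) \<and>
        (\<forall>i. N i \<subset> N (Suc i)) \<and> (\<Union>i. N i) \<in> lbase T (V_delta (topspace T) \<delta>)) \<or>
     (\<exists>N :: nat \<Rightarrow> 'a set. (\<forall>i. N i \<in> lbase T (V_delta (topspace T) \<delta>)) \<and>
        (\<forall>i. N (Suc i) \<subset> N i) \<and> (\<Inter>i. N i) \<in> lbase T (V_delta (topspace T) \<delta>))"
proof -
  define X where "X = topspace T"
  define V0 where "V0 = V_delta X \<delta>"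
  have qp: "quasi_proximity X \<delta>" using qp0 X_def by simp
  have qu: "quasi_uniformity X \<V>" and pr: "qu_proximity X \<V> = \<delta>"
    using V unfolding qu_pi_def X_def by auto
  have cp: "qu_compatible T \<V>" and tr: "qu_transitive \<V>" using V unfolding qu_T_def by auto
  have cpD: "openin T G \<longleftrightarrow> G \<subseteq> X \<and> (\<forall>x\<in>G. \<exists>U\<in>\<V>. U `` {x} \<subseteq> G)" for G
    using cp unfolding qu_compatible_def X_def by blast
  have sub: "V0 \<subseteq> \<V>" using V0_sub_V[OF qp qu pr] V0_def by simp
  obtain U where U: "U \<in> \<V>" "U \<notin> V0" using ne sub X_def V0_def by blast
  obtain V' where V': "V' \<in> \<V>" "trans V'" "V' \<subseteq> U" using tr U(1) unfolding qu_transitive_def by blast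
  have V'X: "V' \<subseteq> X \<times> X" using quD1[OF qu V'(1)] .
  have V'refl: "Id_on X \<subseteq> V'" using quD2[OF qu V'(1)] .
  have V'n: "V' \<notin> V0"
  proof
    assume "V' \<in> V0"
    hence "U \<in> V0" using V0_up[OF qp, of V' U] quD1[OF qu U(1)] V'(3) V0_def by blast
    thus False using U(2) by blast
  qed
  define up where "up C \<longleftrightarrow> C \<subseteq> X \<and> V' `` C \<subseteq> C" for C
  have up_lb: "C \<in> lbase T V0" if h: "up C" for C
  proof -
    have CX: "C \<subseteq> X" using h up_def by blast
    have img: "V' `` {x} \<subseteq> C" if "x \<in> C" for x using h that unfolding up_def by blast
    have op: "openin T C" unfolding cpD using CX img V'(1) by blast
    have "(C \<times> (X - C)) \<inter> V' = {}" using h unfolding up_def by blast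
    hence "\<not> qu_proximity X \<V> C (X - C)" unfolding qu_proximity_def using V'(1) by blast
    hence "\<not> \<delta> C (X - C)" using pr by simp
    hence "U_N X C \<in> V0" using UN_in_V0[OF qp CX] V0_def by simp
    thus ?thesis unfolding lbase_def using op X_def by simp
  qed
  have up_Union: "up (\<Union>K)" if "\<forall>C\<in>K. up C" for K using that unfolding up_def by blast
  have up_Inter: "up (\<Inter>K)" if "K \<noteq> {}" "\<forall>C\<in>K. up C" for K using that unfolding up_def by blast
  define S where "S x = V' `` {x}" for x
  have S_up: "up (S x)" if "x \<in> X" for x
  proof -
    have "S x \<subseteq> X" unfolding S_def using V'X by blast
    moreover have "V' `` S x \<subseteq> S x" unfolding S_def using V'(2) unfolding trans_def by blast
    ultimately show ?thesis unfolding up_def by blast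
  qed
  have S_self: "x \<in> S x" if "x \<in> X" for x using V'refl that unfolding S_def Id_on_def by blast
  have S_sub: "S y \<subseteq> S x" if "y \<in> S x" for x y using V'(2) that unfolding S_def trans_def by blast
  have inf: "infinite (S ` X)"
  proof
    assume fin: "finite (S ` X)"
    define F where "F = (\<lambda>N. (N, X - N)) ` (S ` X)"
    have finF: "finite F" unfolding F_def using fin by simp
    have farF: "F \<subseteq> {(A, B). A \<subseteq> X \<and> B \<subseteq> X \<and> \<not> \<delta> A B}"
    proof
      fix p assume "p \<in> F"
      then obtain x where x: "x \<in> X" "p = (S x, X - S x)" unfolding F_def by blast
      have "S x \<in> lbase T V0" using up_lb S_up x(1) by blast
      hence "U_N X (S x) \<in> V_delta X \<delta>" unfolding lbase_def V0_def X_def by simp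
      moreover have "S x \<subseteq> X" using S_up[OF x(1)] unfolding up_def by blast
      ultimately have "\<not> \<delta> (S x) (X - S x)" using V0_UN_far[OF qp] by blast
      thus "p \<in> {(A, B). A \<subseteq> X \<and> B \<subseteq> X \<and> \<not> \<delta> A B}" using x \<open>S x \<subseteq> X\<close> by blast
    qed
    have "RF X F \<subseteq> V'"
    proof
      fix z assume z: "z \<in> RF X F"
      obtain a b where ab: "z = (a, b)" by force
      have zz: "a \<in> X \<and> b \<in> X \<and> (\<forall>(A,B)\<in>F. a \<in> A \<longrightarrow> b \<notin> B)"
        using z unfolding ab RF_mem .
      have abX: "a \<in> X" "b \<in> X" and all: "\<forall>(A,B)\<in>F. a \<in> A \<longrightarrow> b \<notin> B"
        using zz by auto
      have inF: "(S a, X - S a) \<in> F" unfolding F_def using abX by blast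
      have "b \<notin> X - S a" using bspec[OF all inF] S_self[OF abX(1)] by simp
      hence "b \<in> S a" using abX by blast
      thus "z \<in> V'" using ab unfolding S_def by blast
    qed
    hence "V' \<in> V0" unfolding V0_def using V0_I[OF qp finF farF _ V'X] by blast
    thus False using V'n by blast
  qed
  obtain f :: "nat \<Rightarrow> 'a set" where f: "inj f" "range f \<subseteq> S ` X"
    using iffD1[OF infinite_iff_countable_subset inf] by (elim exE conjE)
  have "\<forall>i. \<exists>x. x \<in> X \<and> f i = S x" using f(2) by blast
  then obtain xs where xs: "\<And>i. xs i \<in> X" "\<And>i. f i = S (xs i)" by metis
  have f_up: "up (f i)" for i using xs S_up by simp
  define col where "col e = (if f (Min e) \<subset> f (Max e) then 0 else if f (Max e) \<subset> f (Min e) then 1 else (2::nat))" for e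
  have "\<exists>Y t. Y \<subseteq> (UNIV::nat set) \<and> infinite Y \<and> t < 3 \<and> (\<forall>x\<in>Y. \<forall>y\<in>Y. x\<noteq>y \<longrightarrow> col {x, y} = t)"
    by (rule Ramsey2) (auto simp: col_def)
  then obtain Y t where Y: "infinite Y" "t < 3" "\<forall>x\<in>Y. \<forall>y\<in>Y. x\<noteq>y \<longrightarrow> col {x, y} = t" by blast
  define h where "h = enumerate Y"
  have hY: "h k \<in> Y" for k unfolding h_def using enumerate_in_set[OF Y(1)] .
  have hmono: "h m < h n" if "m < n" for m n unfolding h_def using enumerate_mono[OF that Y(1)] .
  have C: "(if f (h m) \<subset> f (h n) then 0 else if f (h n) \<subset> f (h m) then 1 else (2::nat)) = t"
    if "m < n" for m n
  proof -
    have c: "col {h m, h n} = t" using Y(3) hY hmono[OF that] by (metis less_irrefl)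
    have mm: "Min {h m, h n} = h m" "Max {h m, h n} = h n" using hmono[OF that] by auto
    show ?thesis using c unfolding col_def mm .
  qed
  have lbX: "lbase T V0 = lbase T (V_delta (topspace T) \<delta>)" unfolding V0_def X_def ..
  consider "t = 0" | "t = 1" | "t = 2" using Y(2) by linarith
  then show ?thesis
  proof cases
    case 1
    define N where "N k = f (h k)" for k
    have "N k \<subset> N (Suc k)" for k using if3_0[OF C[of k "Suc k", unfolded 1]] unfolding N_def by simp
    moreover have "N k \<in> lbase T V0" for k unfolding N_def using up_lb f_up by blast
    moreover have "(\<Union>k. N k) \<in> lbase T V0" using up_lb up_Union[of "range N"] f_up unfolding N_def by blast
    ultimately show ?thesis unfolding lbX by blast
  next
    case 2
    define N where "N k = f (h k)" for k
    have "N (Suc k) \<subset> N k" for k using if3_1[OF C[of k "Suc k", unfolded 2]] unfolding N_def by simp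
    moreover have "N k \<in> lbase T V0" for k unfolding N_def using up_lb f_up by blast
    moreover have "(\<Inter>k. N k) \<in> lbase T V0" using up_lb up_Inter[of "range N"] f_up unfolding N_def by blast
    ultimately show ?thesis unfolding lbX by blast
  next
    case 3
    define N where "N k = (\<Union>m\<in>{..k}. f (h m))" for k
    have Nup: "up (N k)" for k unfolding N_def using up_Union[of "(\<lambda>m. f (h m)) ` {..k}"] f_up by blast
    have "N k \<subset> N (Suc k)" for k
    proof -
      have le: "N k \<subseteq> N (Suc k)" unfolding N_def by (intro UN_mono) auto
      have "\<not> f (h (Suc k)) \<subseteq> N k"
      proof
        assume a: "f (h (Suc k)) \<subseteq> N k"
        have "xs (h (Suc k)) \<in> f (h (Suc k))" using S_self xs by simp
        then obtain m where m: "m \<le> k" "xs (h (Suc k)) \<in> f (h m)" using a unfolding N_def by blast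
        have s1: "f (h (Suc k)) \<subseteq> f (h m)" using S_sub[of "xs (h (Suc k))" "xs (h m)"] m(2) xs by simp
        have "h m \<noteq> h (Suc k)" using hmono[of m "Suc k"] m(1) by simp
        hence "f (h (Suc k)) \<noteq> f (h m)" using f(1) unfolding inj_def by blast
        hence "f (h (Suc k)) \<subset> f (h m)" using s1 by blast
        thus False using if3_2[OF C[of m "Suc k", unfolded 3]] m(1) by simp
      qed
      moreover have "f (h (Suc k)) \<subseteq> N (Suc k)" unfolding N_def by auto
      ultimately show ?thesis using le by blast
    qed
    moreover have "N k \<in> lbase T V0" for k using up_lb Nup by blast
    moreover have "(\<Union>k. N k) \<in> lbase T V0" using up_lb up_Union[of "range N"] Nup by blast
    ultimately show ?thesis unfolding lbX by blast
  qed
qed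




lemma RF_img: "a \<in> X \<Longrightarrow> RF X F `` {a} = X - \<Union>(snd ` {p\<in>F. a \<in> fst p})"
  by (auto simp: RF_mem)

lemma RF_img_finite: "finite F \<Longrightarrow> finite ((\<lambda>a. RF X F `` {a}) ` X)"
proof -
  assume fin: "finite F"
  have "(\<lambda>a. RF X F `` {a}) ` X \<subseteq> (\<lambda>K. X - \<Union>(snd ` K)) ` Pow F"
  proof
    fix G assume "G \<in> (\<lambda>a. RF X F `` {a}) ` X"
    then obtain a where a: "a \<in> X" "G = RF X F `` {a}" by blast
    have "G = X - \<Union>(snd ` {p\<in>F. a \<in> fst p})" using a RF_img by simp
    moreover have "{p\<in>F. a \<in> fst p} \<in> Pow F" by blast
    ultimately show "G \<in> (\<lambda>K. X - \<Union>(snd ` K)) ` Pow F" by blast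
  qed
  moreover have "finite ((\<lambda>K. X - \<Union>(snd ` K)) ` Pow F)" using fin by simp
  ultimately show ?thesis using finite_subset by blast
qed

lemma gen_bwd:
  fixes T :: "'a topology" and \<delta> :: "'a set \<Rightarrow> 'a set \<Rightarrow> bool" and W :: "('a \<times> 'a) set"
  assumes qp: "quasi_proximity (topspace T) \<delta>"
    and qc: "qp_compatible T \<delta>"
    and trV0: "qu_transitive (V_delta (topspace T) \<delta>)"
    and Wdef: "W = {(a, c). a \<in> topspace T \<and> c \<in> topspace T \<and> (\<forall>i. a \<in> N i \<longrightarrow> c \<in> N i)}"
    and notV0: "\<And>F. finite F \<Longrightarrow> F \<subseteq> {(A, B). A \<subseteq> topspace T \<and> B \<subseteq> topspace T \<and> \<not> \<delta> A B} \<Longrightarrow> \<not> RF (topspace T) F \<subseteq> W"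
    and opn: "\<And>x. x \<in> topspace T \<Longrightarrow> \<exists>Op. openin T Op \<and> x \<in> Op \<and> (\<forall>i. x \<in> N i \<longrightarrow> Op \<subseteq> N i)"
    and prox: "\<And>A B F. \<delta> A B \<Longrightarrow> finite F \<Longrightarrow> F \<subseteq> {(A, B). A \<subseteq> topspace T \<and> B \<subseteq> topspace T \<and> \<not> \<delta> A B} \<Longrightarrow>
                 (A \<times> B) \<inter> RF (topspace T) F \<inter> W \<noteq> {}"
  shows "\<exists>\<V>. \<V> \<in> qu_pi (topspace T) \<delta> \<inter> qu_T T \<and> \<V> \<noteq> V_delta (topspace T) \<delta>"
proof -
  define X where "X = topspace T"
  define V0 where "V0 = V_delta X \<delta>"
  have qpX: "quasi_proximity X \<delta>" using qp X_def by simp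
  have qcD: "openin T G \<longleftrightarrow> G \<subseteq> X \<and> (\<forall>x\<in>G. \<not> \<delta> {x} (X - G))" for G
    using qc unfolding qp_compatible_def X_def by blast
  have Wmem: "(a, c) \<in> W \<longleftrightarrow> a \<in> X \<and> c \<in> X \<and> (\<forall>i. a \<in> N i \<longrightarrow> c \<in> N i)" for a c
    using Wdef X_def by simp
  have Wtr: "trans W" unfolding trans_def Wmem by blast
  have WX: "W \<subseteq> X \<times> X" using Wmem by auto
  have Wrefl: "Id_on X \<subseteq> W" using Wmem by (auto simp: Id_on_def)
  define \<V> where "\<V> = {U. U \<subseteq> X \<times> X \<and> (\<exists>U0\<in>V0. U0 \<inter> W \<subseteq> U)}"
  have VI: "U \<in> \<V>" if "U0 \<in> V0" "U0 \<inter> W \<subseteq> U" "U \<subseteq> X \<times> X" for U U0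
    unfolding \<V>_def using that by blast
  have VE: "\<exists>U0\<in>V0. U0 \<inter> W \<subseteq> U" "U \<subseteq> X \<times> X" if "U \<in> \<V>" for U using that unfolding \<V>_def by blast+
  have XX: "X \<times> X \<in> V0"
  proof -
    have "RF X {} = X \<times> X" unfolding RF_def by simp
    thus ?thesis using RF_in_V0[OF qpX, of "{}"] V0_def by simp
  qed
  have V0sub: "V0 \<subseteq> \<V>"
  proof
    fix U assume "U \<in> V0"
    thus "U \<in> \<V>" using VI[of U U] V0_E[OF qpX, of U] V0_def by blast
  qed
  have RFV0: "RF X F \<in> V0" if "finite F" "F \<subseteq> {(A, B). A \<subseteq> X \<and> B \<subseteq> X \<and> \<not> \<delta> A B}" for F using RF_in_V0[OF qpX that(1)] that(2) V0_def by simp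
  have qu: "quasi_uniformity X \<V>"
    unfolding quasi_uniformity_def
  proof (intro conjI ballI allI impI)
    show "\<V> \<noteq> {}" using V0sub XX by blast
  next
    fix U assume "U \<in> \<V>" thus "U \<subseteq> X \<times> X" using VE by blast
  next
    fix U assume U: "U \<in> \<V>"
    then obtain U0 where "U0 \<in> V0" "U0 \<inter> W \<subseteq> U" using VE by blast
    moreover have "Id_on X \<subseteq> U0" using V0_refl[OF qpX] \<open>U0 \<in> V0\<close> V0_def by blast
    ultimately show "Id_on X \<subseteq> U" using Wrefl by blast
  next
    fix U W' assume h: "U \<in> \<V> \<and> U \<subseteq> W' \<and> W' \<subseteq> X \<times> X"
    then obtain U0 where "U0 \<in> V0" "U0 \<inter> W \<subseteq> U" using VE by blast
    thus "W' \<in> \<V>" using VI h by blast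
  next
    fix U U' assume h: "U \<in> \<V>" "U' \<in> \<V>"
    obtain U0 where U0: "U0 \<in> V0" "U0 \<inter> W \<subseteq> U" using VE h(1) by blast
    obtain U0' where U0': "U0' \<in> V0" "U0' \<inter> W \<subseteq> U'" using VE h(2) by blast
    have "U0 \<inter> U0' \<in> V0" using V0_Int[OF qpX] U0 U0' V0_def by blast
    moreover have "(U0 \<inter> U0') \<inter> W \<subseteq> U \<inter> U'" using U0 U0' by blast
    moreover have "U \<inter> U' \<subseteq> X \<times> X" using VE h by blast
    ultimately show "U \<inter> U' \<in> \<V>" using VI by blast
  next
    fix U assume h: "U \<in> \<V>"
    obtain U0 where U0: "U0 \<in> V0" "U0 \<inter> W \<subseteq> U" using VE h by blast
    obtain T0 where T0: "T0 \<in> V0" "trans T0" "T0 \<subseteq> U0" using trV0 U0(1) unfolding qu_transitive_def V0_def X_def by blast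
    have T0X: "T0 \<subseteq> X \<times> X" using V0_E[OF qpX, of T0] T0(1) V0_def by blast
    have "T0 \<inter> W \<in> \<V>" using VI[OF T0(1), of "T0 \<inter> W"] T0X by blast
    moreover have "(T0 \<inter> W) O (T0 \<inter> W) \<subseteq> U" using T0(2,3) Wtr U0(2) unfolding trans_def by blast
    ultimately show "\<exists>V\<in>\<V>. V O V \<subseteq> U" by blast
  qed
  have tr: "qu_transitive \<V>"
    unfolding qu_transitive_def
  proof
    fix U assume h: "U \<in> \<V>"
    obtain U0 where U0: "U0 \<in> V0" "U0 \<inter> W \<subseteq> U" using VE h by blast
    obtain T0 where T0: "T0 \<in> V0" "trans T0" "T0 \<subseteq> U0" using trV0 U0(1) unfolding qu_transitive_def V0_def X_def by blast
    have T0X: "T0 \<subseteq> X \<times> X" using V0_E[OF qpX, of T0] T0(1) V0_def by blast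
    have "T0 \<inter> W \<in> \<V>" using VI[OF T0(1), of "T0 \<inter> W"] T0X by blast
    moreover have "trans (T0 \<inter> W)" using T0(2) Wtr by (rule trans_Int)
    moreover have "T0 \<inter> W \<subseteq> U" using T0(3) U0(2) by blast
    ultimately show "\<exists>V\<in>\<V>. trans V \<and> V \<subseteq> U" by blast
  qed
  have cp: "qu_compatible T \<V>"
    unfolding qu_compatible_def
  proof (intro allI iffI)
    fix G assume G: "openin T G"
    have GX: "G \<subseteq> X" using G qcD by blast
    have "\<exists>U\<in>\<V>. U `` {x} \<subseteq> G" if x: "x \<in> G" for x
    proof -
      have far1: "\<not> \<delta> {x} (X - G)" using G qcD x by blast
      have "RF X {({x}, X - G)} \<in> V0" using RFV0[of "{({x}, X - G)}"] far1 GX x by blast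
      hence "RF X {({x}, X - G)} \<in> \<V>" using V0sub by blast
      moreover have "RF X {({x}, X - G)} `` {x} \<subseteq> G" by (auto simp: RF_mem)
      ultimately show ?thesis by blast
    qed
    thus "G \<subseteq> topspace T \<and> (\<forall>x\<in>G. \<exists>U\<in>\<V>. U `` {x} \<subseteq> G)" using GX X_def by blast
  next
    fix G assume G: "G \<subseteq> topspace T \<and> (\<forall>x\<in>G. \<exists>U\<in>\<V>. U `` {x} \<subseteq> G)"
    have GX: "G \<subseteq> X" using G X_def by blast
    have "\<not> \<delta> {x} (X - G)" if x: "x \<in> G" for x
    proof -
      obtain U where U: "U \<in> \<V>" "U `` {x} \<subseteq> G" using G x by blast
      obtain U0 where U0: "U0 \<in> V0" "U0 \<inter> W \<subseteq> U" using VE U(1) by blast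
      obtain F where F: "finite F" "F \<subseteq> {(A, B). A \<subseteq> X \<and> B \<subseteq> X \<and> \<not> \<delta> A B}" "RF X F \<subseteq> U0" "U0 \<subseteq> X \<times> X"
        using V0_E[OF qpX U0(1)[unfolded V0_def]] .
      have xX: "x \<in> X" using x GX by blast
      obtain Op where Op: "openin T Op" "x \<in> Op" "\<forall>i. x \<in> N i \<longrightarrow> Op \<subseteq> N i" using opn xX X_def by blast
      have OX: "Op \<subseteq> X" using Op(1) qcD by blast
      define K where "K = snd ` {p\<in>F. x \<in> fst p}"
      have finK: "finite K" unfolding K_def using F(1) by simp
      have cover: "X - G \<subseteq> (X - Op) \<union> \<Union>K"
      proof
        fix y assume y: "y \<in> X - G"
        show "y \<in> (X - Op) \<union> \<Union>K"
        proof (rule ccontr)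
          assume "y \<notin> (X - Op) \<union> \<Union>K"
          hence yO: "y \<in> Op" and yK: "y \<notin> \<Union>K" using y by auto
          have "(x, y) \<in> RF X F"
          proof -
            have "y \<notin> B'" if "(A', B') \<in> F" "x \<in> A'" for A' B'
              using yK that unfolding K_def by force
            thus ?thesis unfolding RF_mem using xX y by blast
          qed
          moreover have "(x, y) \<in> W" unfolding Wmem using xX y Op(3) yO by blast
          ultimately have "y \<in> U `` {x}" using F(3) U0(2) by blast
          thus False using U(2) y by blast
        qed
      qed
      have f1: "\<not> \<delta> {x} (X - Op)" using Op qcD by blast
      have f2: "B' \<subseteq> X \<and> \<not> \<delta> {x} B'" if BK: "B' \<in> K" for B'
      proof -
        obtain p where p: "p \<in> F" "x \<in> fst p" "B' = snd p" using BK unfolding K_def by blast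
        obtain A' where A': "(A', B') \<in> F" "x \<in> A'" using p by (cases p) auto
        have "A' \<subseteq> X" "B' \<subseteq> X" "\<not> \<delta> A' B'" using A'(1) F(2) by blast+
        thus ?thesis using qp_mono[OF qpX, of "{x}" B' A' B'] A'(2) by blast
      qed
      have "\<not> \<delta> {x} (\<Union>(insert (X - Op) K))"
        using qp_far_Union[OF qpX, of "insert (X - Op) K" "{x}"] finK f1 f2 xX by blast
      hence f3: "\<not> \<delta> {x} ((X - Op) \<union> \<Union>K)" by simp
      show ?thesis
      proof
        assume "\<delta> {x} (X - G)"
        hence "\<delta> {x} ((X - Op) \<union> \<Union>K)" using qp_mono[OF qpX, of "{x}" "X - G" "{x}" "(X - Op) \<union> \<Union>K"]
          cover xX f2 by blast
        thus False using f3 by blast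
      qed
    qed
    thus "openin T G" using qcD GX by blast
  qed
  have pr: "qu_proximity X \<V> = \<delta>"
  proof (intro ext iffI)
    fix A B assume h: "qu_proximity X \<V> A B"
    have AB: "A \<subseteq> X" "B \<subseteq> X" using h unfolding qu_proximity_def by blast+
    show "\<delta> A B"
    proof (rule ccontr)
      assume nf: "\<not> \<delta> A B"
      have "RF X {(A, B)} \<in> V0" using RFV0[of "{(A,B)}"] nf AB by blast
      hence "RF X {(A, B)} \<in> \<V>" using V0sub by blast
      moreover have "(A \<times> B) \<inter> RF X {(A, B)} = {}" by (auto simp: RF_mem)
      ultimately show False using h unfolding qu_proximity_def by blast
    qed
  next
    fix A B assume h: "\<delta> A B"
    have AB: "A \<subseteq> X" "B \<subseteq> X" using qp_sub[OF qpX h] by blast+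
    have "(A \<times> B) \<inter> U \<noteq> {}" if U: "U \<in> \<V>" for U
    proof -
      obtain U0 where U0: "U0 \<in> V0" "U0 \<inter> W \<subseteq> U" using VE U by blast
      obtain F where F: "finite F" "F \<subseteq> {(A, B). A \<subseteq> X \<and> B \<subseteq> X \<and> \<not> \<delta> A B}" "RF X F \<subseteq> U0" "U0 \<subseteq> X \<times> X"
        using V0_E[OF qpX U0(1)[unfolded V0_def]] .
      have "(A \<times> B) \<inter> RF X F \<inter> W \<noteq> {}" using prox[OF h F(1)] F(2) unfolding X_def by blast
      thus ?thesis using F(3) U0(2) by blast
    qed
    thus "qu_proximity X \<V> A B" unfolding qu_proximity_def using AB by blast
  qed
  have neq: "\<V> \<noteq> V0"
  proof
    assume e: "\<V> = V0"
    have "W \<in> \<V>" using VI[OF XX, of W] WX by blast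
    have "W \<in> V0" using e \<open>W \<in> \<V>\<close> by simp
    obtain F where F: "finite F" "F \<subseteq> {(A, B). A \<subseteq> X \<and> B \<subseteq> X \<and> \<not> \<delta> A B}" "RF X F \<subseteq> W" "W \<subseteq> X \<times> X"
      using V0_E[OF qpX \<open>W \<in> V0\<close>[unfolded V0_def]] .
    thus False using notV0[OF F(1)] F(2) unfolding X_def by blast
  qed
  have "\<V> \<in> qu_pi (topspace T) \<delta> \<inter> qu_T T"
    unfolding qu_pi_def qu_T_def using qu pr cp tr X_def by simp
  thus ?thesis using neq V0_def X_def by blast
qed




lemma two_same: "finite (range (g :: nat \<Rightarrow> 'b)) \<Longrightarrow> \<exists>i j. i < j \<and> g i = g j"
proof -
  assume fin: "finite (range g)"
  have "\<not> inj g" using fin finite_imageD infinite_UNIV_nat by blast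
  then obtain i j where ij: "i \<noteq> j" "g i = g j" unfolding inj_def by blast
  show ?thesis
  proof (cases "i < j")
    case True thus ?thesis using ij by blast
  next
    case False hence "j < i" using ij by simp
    thus ?thesis using ij by metis
  qed
qed

lemma inf_same: "finite (range (g :: nat \<Rightarrow> 'b)) \<Longrightarrow> \<exists>n0. infinite {n. g n = g n0}"
  using pigeonhole_infinite[of "UNIV :: nat set" g] by auto

lemma RF_anti: "F \<subseteq> F' \<Longrightarrow> RF X F' \<subseteq> RF X F" unfolding RF_def by blast

lemma lbase_far:
  assumes qp: "quasi_proximity (topspace T) \<delta>" and h: "N \<in> lbase T (V_delta (topspace T) \<delta>)"
  shows "N \<subseteq> topspace T" "\<not> \<delta> N (topspace T - N)" "openin T N"
proof -
  show NX: "N \<subseteq> topspace T" using h openin_subset unfolding lbase_def by blast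
  show "\<not> \<delta> N (topspace T - N)" using V0_UN_far[OF qp _ NX] h unfolding lbase_def by blast
  show "openin T N" using h unfolding lbase_def by blast
qed

lemma RF_refl:
  assumes qp: "quasi_proximity X \<delta>" "finite F" "F \<subseteq> {(A, B). A \<subseteq> X \<and> B \<subseteq> X \<and> \<not> \<delta> A B}" "a \<in> X"
  shows "(a, a) \<in> RF X F"
  using V0_refl[OF qp(1) RF_in_V0[OF qp(1-3)]] qp(4) by (auto simp: Id_on_def)

lemma bwd_inc:
  fixes T :: "'a topology" and \<delta> :: "'a set \<Rightarrow> 'a set \<Rightarrow> bool" and N :: "nat \<Rightarrow> 'a set"
  assumes qp: "quasi_proximity (topspace T) \<delta>"
    and qc: "qp_compatible T \<delta>"
    and trV0: "qu_transitive (V_delta (topspace T) \<delta>)"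
    and Nlb: "\<forall>i. N i \<in> lbase T (V_delta (topspace T) \<delta>)"
    and inc: "\<forall>i. N i \<subset> N (Suc i)"
    and Mlb: "(\<Union>i. N i) \<in> lbase T (V_delta (topspace T) \<delta>)"
  shows "\<exists>\<V>. \<V> \<in> qu_pi (topspace T) \<delta> \<inter> qu_T T \<and> \<V> \<noteq> V_delta (topspace T) \<delta>"
proof -
  define X where "X = topspace T"
  have qpX: "quasi_proximity X \<delta>" using qp X_def by simp
  define W where "W = {(a, c). a \<in> topspace T \<and> c \<in> topspace T \<and> (\<forall>i. a \<in> N i \<longrightarrow> c \<in> N i)}"
  have Wmem: "(a, c) \<in> W \<longleftrightarrow> a \<in> X \<and> c \<in> X \<and> (\<forall>i. a \<in> N i \<longrightarrow> c \<in> N i)" for a c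
    using W_def X_def by simp
  have NX: "N i \<subseteq> X" and farN: "\<not> \<delta> (N i) (X - N i)" and opN: "openin T (N i)" for i
    using lbase_far[OF qp] Nlb X_def by blast+
  define M where "M = (\<Union>i. N i)"
  have MX: "M \<subseteq> X" and farM: "\<not> \<delta> M (X - M)" using lbase_far[OF qp] Mlb X_def M_def by blast+
  have mono: "N i \<subseteq> N j" if "i \<le> j" for i j
    using lift_Suc_mono_le[of N, OF _ that] inc by blast
  have notV0: "\<not> RF X F \<subseteq> W" if F: "finite F" "F \<subseteq> {(A, B). A \<subseteq> X \<and> B \<subseteq> X \<and> \<not> \<delta> A B}" for F
  proof
    assume sub: "RF X F \<subseteq> W"
    have "\<exists>p. p \<in> N (Suc i) - N i" for i using inc by blast
    then obtain p where p: "\<And>i. p i \<in> N (Suc i) - N i" by metis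
    have pX: "p i \<in> X" for i using p NX by blast
    define g where "g a = RF X F `` {a}" for a
    have "range (g \<circ> p) \<subseteq> g ` X" using pX by auto
    hence "finite (range (g \<circ> p))" using RF_img_finite[OF F(1), of X] finite_subset unfolding g_def by blast
    then obtain i j where ij: "i < j" "g (p i) = g (p j)" using two_same[of "g \<circ> p"] by auto
    have "p j \<in> g (p j)" unfolding g_def using RF_refl[OF qpX F pX] by blast
    hence "(p i, p j) \<in> RF X F" using ij(2) unfolding g_def by blast
    hence "(p i, p j) \<in> W" using sub by blast
    hence "p j \<in> N (Suc i)" using p[of i] unfolding Wmem by blast
    moreover have "N (Suc i) \<subseteq> N j" using mono ij(1) by simp
    ultimately show False using p[of j] by blast
  qed
  have opn: "\<exists>Op. openin T Op \<and> x \<in> Op \<and> (\<forall>i. x \<in> N i \<longrightarrow> Op \<subseteq> N i)" if x: "x \<in> X" for x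
  proof (cases "\<exists>i. x \<in> N i")
    case True
    define k where "k = (LEAST i. x \<in> N i)"
    have k: "x \<in> N k" unfolding k_def using True by (metis LeastI)
    have "N k \<subseteq> N i" if "x \<in> N i" for i using mono Least_le[of "\<lambda>i. x \<in> N i", OF that] k_def by blast
    thus ?thesis using k opN by blast
  next
    case False
    thus ?thesis using x X_def by (intro exI[of _ X]) auto
  qed
  have prox: "(A \<times> B) \<inter> RF X F \<inter> W \<noteq> {}"
    if h: "\<delta> A B" and F: "finite F" "F \<subseteq> {(A, B). A \<subseteq> X \<and> B \<subseteq> X \<and> \<not> \<delta> A B}" for A B F
  proof
    assume H: "(A \<times> B) \<inter> RF X F \<inter> W = {}"
    have AB: "A \<subseteq> X" "B \<subseteq> X" using qp_sub[OF qpX h] by blast+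
    define Fn where "Fn n = F \<union> (\<lambda>m. (N m, X - N m)) ` {..n} \<union> {(M, X - M)}" for n
    have finFn: "finite (Fn n)" for n unfolding Fn_def using F(1) by simp
    have farFn: "Fn n \<subseteq> {(A, B). A \<subseteq> X \<and> B \<subseteq> X \<and> \<not> \<delta> A B}" for n
      unfolding Fn_def using F(2) NX farN MX farM by auto
    have "\<exists>a b. a \<in> A \<and> b \<in> B \<and> (a, b) \<in> RF X (Fn n)" for n
    proof (rule ccontr)
      assume "\<not> ?thesis"
      hence "(A \<times> B) \<inter> RF X (Fn n) = {}" by blast
      thus False using key[OF qpX finFn farFn AB] h by blast
    qed
    then obtain a b where ab: "\<And>n. a n \<in> A" "\<And>n. b n \<in> B" "\<And>n. (a n, b n) \<in> RF X (Fn n)" by metis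
    have abX: "a n \<in> X" "b n \<in> X" for n using ab AB by blast+
    have R1: "(a n, b n) \<in> RF X F" for n using ab(3) RF_anti[of F "Fn n" X] unfolding Fn_def by blast
    have RR: "\<forall>(A', B')\<in>Fn n. a n \<in> A' \<longrightarrow> b n \<notin> B'" for n using ab(3)[of n] unfolding RF_mem by blast
    have R2: "b n \<in> N m" if "m \<le> n" "a n \<in> N m" for m n
    proof -
      have mem: "(N m, X - N m) \<in> Fn n" unfolding Fn_def using that(1) by blast
      have "a n \<in> N m \<longrightarrow> b n \<notin> X - N m" using bspec[OF RR[of n] mem] by simp
      thus ?thesis using that(2) abX by blast
    qed
    have R3: "b n \<in> M" if "a n \<in> M" for n
    proof -
      have mem: "(M, X - M) \<in> Fn n" unfolding Fn_def by blast
      have "a n \<in> M \<longrightarrow> b n \<notin> X - M" using bspec[OF RR[of n] mem] by simp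
      thus ?thesis using that abX by blast
    qed
    have nW: "(a n, b n) \<notin> W" for n using H R1 ab by blast
    have an: "a n \<notin> N n" for n
    proof
      assume an: "a n \<in> N n"
      define k where "k = (LEAST i. a n \<in> N i)"
      have k: "a n \<in> N k" unfolding k_def using an by (metis LeastI)
      have kn: "k \<le> n" unfolding k_def using an by (rule Least_le)
      have bk: "b n \<in> N k" using R2[OF kn k] .
      have "b n \<in> N i" if "a n \<in> N i" for i
        using mono Least_le[of "\<lambda>i. a n \<in> N i", OF that] k_def bk by blast
      hence "(a n, b n) \<in> W" unfolding Wmem using abX by blast
      thus False using nW by blast
    qed
    have aM: "a n \<in> M" for n
    proof (rule ccontr)
      assume "a n \<notin> M"
      hence "(a n, b n) \<in> W" unfolding Wmem M_def using abX by blast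
      thus False using nW by blast
    qed
    have bM: "b n \<in> M" for n using R3 aM by blast
    define g where "g x = RF X F `` {x}" for x
    have "range (g \<circ> a) \<subseteq> g ` X" using abX by auto
    hence "finite (range (g \<circ> a))" using RF_img_finite[OF F(1), of X] finite_subset unfolding g_def by blast
    then obtain n0 where J: "infinite {n. g (a n) = g (a n0)}" using inf_same[of "g \<circ> a"] by auto
    obtain k where k: "b n0 \<in> N k" using bM[of n0] unfolding M_def by blast
    obtain n where n: "n \<ge> k" "g (a n) = g (a n0)" using J unfolding infinite_nat_iff_unbounded_le by blast
    have "(a n, b n0) \<in> RF X F" using R1[of n0] n(2) unfolding g_def by blast
    moreover have "(a n, b n0) \<in> W"
    proof -
      have "b n0 \<in> N i" if "a n \<in> N i" for i
      proof -
        have "\<not> i \<le> n" using an[of n] mono that by blast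
        hence "k \<le> i" using n(1) by simp
        thus ?thesis using mono k by blast
      qed
      thus ?thesis unfolding Wmem using abX by blast
    qed
    ultimately show False using H ab by blast
  qed
  show ?thesis
    by (rule gen_bwd[OF qp qc trV0 W_def]) (use notV0 opn prox X_def in auto)
qed




lemma bwd_dec:
  fixes T :: "'a topology" and \<delta> :: "'a set \<Rightarrow> 'a set \<Rightarrow> bool" and N :: "nat \<Rightarrow> 'a set"
  assumes qp: "quasi_proximity (topspace T) \<delta>"
    and qc: "qp_compatible T \<delta>"
    and trV0: "qu_transitive (V_delta (topspace T) \<delta>)"
    and Nlb: "\<forall>i. N i \<in> lbase T (V_delta (topspace T) \<delta>)"
    and dec: "\<forall>i. N (Suc i) \<subset> N i"
    and Mlb: "(\<Inter>i. N i) \<in> lbase T (V_delta (topspace T) \<delta>)"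
  shows "\<exists>\<V>. \<V> \<in> qu_pi (topspace T) \<delta> \<inter> qu_T T \<and> \<V> \<noteq> V_delta (topspace T) \<delta>"
proof -
  define X where "X = topspace T"
  have qpX: "quasi_proximity X \<delta>" using qp X_def by simp
  define W where "W = {(a, c). a \<in> topspace T \<and> c \<in> topspace T \<and> (\<forall>i. a \<in> N i \<longrightarrow> c \<in> N i)}"
  have Wmem: "(a, c) \<in> W \<longleftrightarrow> a \<in> X \<and> c \<in> X \<and> (\<forall>i. a \<in> N i \<longrightarrow> c \<in> N i)" for a c
    using W_def X_def by simp
  have NX: "N i \<subseteq> X" and farN: "\<not> \<delta> (N i) (X - N i)" and opN: "openin T (N i)" for i
    using lbase_far[OF qp] Nlb X_def by blast+
  define M where "M = (\<Inter>i. N i)"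
  have MX: "M \<subseteq> X" and farM: "\<not> \<delta> M (X - M)" and opM: "openin T M"
    using lbase_far[OF qp] Mlb X_def M_def by blast+
  have mono: "N j \<subseteq> N i" if "i \<le> j" for i j
    using lift_Suc_antimono_le[of N, OF _ that] dec by blast
  have notV0: "\<not> RF X F \<subseteq> W" if F: "finite F" "F \<subseteq> {(A, B). A \<subseteq> X \<and> B \<subseteq> X \<and> \<not> \<delta> A B}" for F
  proof
    assume sub: "RF X F \<subseteq> W"
    have "\<exists>p. p \<in> N i - N (Suc i)" for i using dec by blast
    then obtain p where p: "\<And>i. p i \<in> N i - N (Suc i)" by metis
    have pX: "p i \<in> X" for i using p NX by blast
    define g where "g a = RF X F `` {a}" for a
    have "range (g \<circ> p) \<subseteq> g ` X" using pX by auto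
    hence "finite (range (g \<circ> p))" using RF_img_finite[OF F(1), of X] finite_subset unfolding g_def by blast
    then obtain i j where ij: "i < j" "g (p i) = g (p j)" using two_same[of "g \<circ> p"] by auto
    have "p i \<in> g (p i)" unfolding g_def using RF_refl[OF qpX F pX] by blast
    hence "(p j, p i) \<in> RF X F" using ij(2) unfolding g_def by blast
    hence "(p j, p i) \<in> W" using sub by blast
    hence "p i \<in> N j" using p[of j] unfolding Wmem by blast
    moreover have "N j \<subseteq> N (Suc i)" using mono ij(1) by simp
    ultimately show False using p[of i] by blast
  qed
  have opn: "\<exists>Op. openin T Op \<and> x \<in> Op \<and> (\<forall>i. x \<in> N i \<longrightarrow> Op \<subseteq> N i)" if x: "x \<in> X" for x
  proof (cases "\<forall>i. x \<in> N i")
    case True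
    hence "x \<in> M" unfolding M_def by blast
    moreover have "M \<subseteq> N i" for i unfolding M_def by blast
    ultimately show ?thesis using opM by blast
  next
    case False
    define k where "k = (LEAST i. x \<notin> N i)"
    have k: "x \<notin> N k" unfolding k_def using False by (metis LeastI)
    have lt: "i < k" if "x \<in> N i" for i
    proof (rule ccontr)
      assume "\<not> i < k" hence "N i \<subseteq> N k" using mono by simp
      thus False using that k by blast
    qed
    show ?thesis
    proof (cases k)
      case 0
      thus ?thesis using x X_def lt by (intro exI[of _ X]) auto
    next
      case (Suc k')
      have "x \<in> N k'" using not_less_Least[of k' "\<lambda>i. x \<notin> N i"] Suc k_def by simp
      moreover have "N k' \<subseteq> N i" if "x \<in> N i" for i using lt[OF that] Suc mono by simp
      ultimately show ?thesis using opN by blast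
    qed
  qed
  have prox: "(A \<times> B) \<inter> RF X F \<inter> W \<noteq> {}"
    if h: "\<delta> A B" and F: "finite F" "F \<subseteq> {(A, B). A \<subseteq> X \<and> B \<subseteq> X \<and> \<not> \<delta> A B}" for A B F
  proof
    assume H: "(A \<times> B) \<inter> RF X F \<inter> W = {}"
    have AB: "A \<subseteq> X" "B \<subseteq> X" using qp_sub[OF qpX h] by blast+
    define Fn where "Fn n = F \<union> (\<lambda>m. (N m, X - N m)) ` {..n} \<union> {(M, X - M)}" for n
    have finFn: "finite (Fn n)" for n unfolding Fn_def using F(1) by simp
    have farFn: "Fn n \<subseteq> {(A, B). A \<subseteq> X \<and> B \<subseteq> X \<and> \<not> \<delta> A B}" for n
      unfolding Fn_def using F(2) NX farN MX farM by auto
    have "\<exists>a b. a \<in> A \<and> b \<in> B \<and> (a, b) \<in> RF X (Fn n)" for n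
    proof (rule ccontr)
      assume "\<not> ?thesis"
      hence "(A \<times> B) \<inter> RF X (Fn n) = {}" by blast
      thus False using key[OF qpX finFn farFn AB] h by blast
    qed
    then obtain a b where ab: "\<And>n. a n \<in> A" "\<And>n. b n \<in> B" "\<And>n. (a n, b n) \<in> RF X (Fn n)" by metis
    have abX: "a n \<in> X" "b n \<in> X" for n using ab AB by blast+
    have R1: "(a n, b n) \<in> RF X F" for n using ab(3) RF_anti[of F "Fn n" X] unfolding Fn_def by blast
    have RR: "\<forall>(A', B')\<in>Fn n. a n \<in> A' \<longrightarrow> b n \<notin> B'" for n using ab(3)[of n] unfolding RF_mem by blast
    have R2: "b n \<in> N m" if "m \<le> n" "a n \<in> N m" for m n
    proof -
      have mem: "(N m, X - N m) \<in> Fn n" unfolding Fn_def using that(1) by blast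
      have "a n \<in> N m \<longrightarrow> b n \<notin> X - N m" using bspec[OF RR[of n] mem] by simp
      thus ?thesis using that(2) abX by blast
    qed
    have R3: "b n \<in> M" if "a n \<in> M" for n
    proof -
      have mem: "(M, X - M) \<in> Fn n" unfolding Fn_def by blast
      have "a n \<in> M \<longrightarrow> b n \<notin> X - M" using bspec[OF RR[of n] mem] by simp
      thus ?thesis using that abX by blast
    qed
    have nW: "(a n, b n) \<notin> W" for n using H R1 ab by blast
    have aM: "a n \<notin> M" for n
    proof
      assume "a n \<in> M"
      hence "b n \<in> M" using R3 by blast
      hence "(a n, b n) \<in> W" unfolding Wmem M_def using abX by blast
      thus False using nW by blast
    qed
    have an: "a n \<in> N n" for n
    proof (rule ccontr)
      assume an: "a n \<notin> N n"
      define k where "k = (LEAST i. a n \<notin> N i)"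
      have k: "a n \<notin> N k" unfolding k_def using an by (metis LeastI)
      have kn: "k \<le> n" unfolding k_def using an by (rule Least_le)
      have "b n \<in> N i" if "a n \<in> N i" for i
      proof -
        have "i < k"
        proof (rule ccontr)
          assume "\<not> i < k" hence "N i \<subseteq> N k" using mono by simp
          thus False using that k by blast
        qed
        thus ?thesis using R2[of i n] kn that by simp
      qed
      hence "(a n, b n) \<in> W" unfolding Wmem using abX by blast
      thus False using nW by blast
    qed
    define g where "g x = RF X F `` {x}" for x
    have "range (g \<circ> a) \<subseteq> g ` X" using abX by auto
    hence "finite (range (g \<circ> a))" using RF_img_finite[OF F(1), of X] finite_subset unfolding g_def by blast
    then obtain n0 where J: "infinite {n. g (a n) = g (a n0)}" using inf_same[of "g \<circ> a"] by auto
    obtain k where k: "a n0 \<notin> N k" using aM[of n0] unfolding M_def by blast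
    obtain n where n: "n \<ge> k" "g (a n) = g (a n0)" using J unfolding infinite_nat_iff_unbounded_le by blast
    have "(a n0, b n) \<in> RF X F" using R1[of n] n(2) unfolding g_def by blast
    moreover have "(a n0, b n) \<in> W"
    proof -
      have bn: "b n \<in> N n" using R2[of n n] an[of n] by simp
      have "b n \<in> N i" if "a n0 \<in> N i" for i
      proof -
        have "i < k"
        proof (rule ccontr)
          assume "\<not> i < k" hence "N i \<subseteq> N k" using mono by simp
          thus False using that k by blast
        qed
        hence "N n \<subseteq> N i" using n(1) mono by simp
        thus ?thesis using bn by blast
      qed
      thus ?thesis unfolding Wmem using abX by blast
    qed
    ultimately show False using H ab by blast
  qed
  show ?thesis
    by (rule gen_bwd[OF qp qc trV0 W_def]) (use notV0 opn prox X_def in auto)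
qed

theorem theorem2p6:
  fixes T :: "'a topology" and \<delta> :: "'a set \<Rightarrow> 'a set \<Rightarrow> bool"
  assumes "quasi_proximity (topspace T) \<delta>"
    and "qp_compatible T \<delta>"
    and "qu_transitive (V_delta (topspace T) \<delta>)"
  shows "(\<exists>\<V>. \<V> \<in> qu_pi (topspace T) \<delta> \<inter> qu_T T \<and> \<V> \<noteq> V_delta (topspace T) \<delta>) \<longleftrightarrow>
    ((\<exists>N :: nat \<Rightarrow> 'a set. (\<forall>i. N i \<in> lbase T (V_delta (topspace T) \<delta>)) \<and>
        (\<forall>i. N i \<subset> N (Suc i)) \<and> (\<Union>i. N i) \<in> lbase T (V_delta (topspace T) \<delta>)) \<or>
     (\<exists>N :: nat \<Rightarrow> 'a set. (\<forall>i. N i \<in> lbase T (V_delta (topspace T) \<delta>)) \<and>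
        (\<forall>i. N (Suc i) \<subset> N i) \<and> (\<Inter>i. N i) \<in> lbase T (V_delta (topspace T) \<delta>)))"
proof
  assume "\<exists>\<V>. \<V> \<in> qu_pi (topspace T) \<delta> \<inter> qu_T T \<and> \<V> \<noteq> V_delta (topspace T) \<delta>"
  then obtain \<V> where "\<V> \<in> qu_pi (topspace T) \<delta> \<inter> qu_T T" "\<V> \<noteq> V_delta (topspace T) \<delta>" by blast
  thus "(\<exists>N :: nat \<Rightarrow> 'a set. (\<forall>i. N i \<in> lbase T (V_delta (topspace T) \<delta>)) \<and>
        (\<forall>i. N i \<subset> N (Suc i)) \<and> (\<Union>i. N i) \<in> lbase T (V_delta (topspace T) \<delta>)) \<or>
     (\<exists>N :: nat \<Rightarrow> 'a set. (\<forall>i. N i \<in> lbase T (V_delta (topspace T) \<delta>)) \<and>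
        (\<forall>i. N (Suc i) \<subset> N i) \<and> (\<Inter>i. N i) \<in> lbase T (V_delta (topspace T) \<delta>))"
    by (rule fwd[OF assms(1)])
next
  assume "(\<exists>N :: nat \<Rightarrow> 'a set. (\<forall>i. N i \<in> lbase T (V_delta (topspace T) \<delta>)) \<and>
        (\<forall>i. N i \<subset> N (Suc i)) \<and> (\<Union>i. N i) \<in> lbase T (V_delta (topspace T) \<delta>)) \<or>
     (\<exists>N :: nat \<Rightarrow> 'a set. (\<forall>i. N i \<in> lbase T (V_delta (topspace T) \<delta>)) \<and>
        (\<forall>i. N (Suc i) \<subset> N i) \<and> (\<Inter>i. N i) \<in> lbase T (V_delta (topspace T) \<delta>))"
  thus "\<exists>\<V>. \<V> \<in> qu_pi (topspace T) \<delta> \<inter> qu_T T \<and> \<V> \<noteq> V_delta (topspace T) \<delta>"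
  proof
    assume "\<exists>N :: nat \<Rightarrow> 'a set. (\<forall>i. N i \<in> lbase T (V_delta (topspace T) \<delta>)) \<and>
        (\<forall>i. N i \<subset> N (Suc i)) \<and> (\<Union>i. N i) \<in> lbase T (V_delta (topspace T) \<delta>)"
    then obtain N :: "nat \<Rightarrow> 'a set" where "\<forall>i. N i \<in> lbase T (V_delta (topspace T) \<delta>)"
      "\<forall>i. N i \<subset> N (Suc i)" "(\<Union>i. N i) \<in> lbase T (V_delta (topspace T) \<delta>)" by blast
    thus ?thesis by (rule bwd_inc[OF assms])
  next
    assume "\<exists>N :: nat \<Rightarrow> 'a set. (\<forall>i. N i \<in> lbase T (V_delta (topspace T) \<delta>)) \<and>
        (\<forall>i. N (Suc i) \<subset> N i) \<and> (\<Inter>i. N i) \<in> lbase T (V_delta (topspace T) \<delta>)"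
    then obtain N :: "nat \<Rightarrow> 'a set" where "\<forall>i. N i \<in> lbase T (V_delta (topspace T) \<delta>)"
      "\<forall>i. N (Suc i) \<subset> N i" "(\<Inter>i. N i) \<in> lbase T (V_delta (topspace T) \<delta>)" by blast
    thus ?thesis by (rule bwd_dec[OF assms])
  qed
qed


end
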